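(* For an integer $m\ge0$ let $\mathbf{S}_m=\{1,\dots,m\}^2$, and let $A_{\mathbf{S}}(m,k)$ be the number of $k$-element subsets of $\mathbf{S}_m$ such that no two distinct elements $(i,j),(i',j')$ satisfy $i=i'$ or $i-j=i'-j'$ (nonattacking placements of $k$ anassas with moves $(0,1),(1,1)$). Then for all integers $m,k\ge0$, $$A_{\mathbf{S}}(m,k)=\sum_{j=0}^{\lceil k/2\rceil}(m-k+j)_j\left\{ {m \atop m-k+j}\right\}2^{k-2j}\left[\binom{k-j}{j-1}+\binom{k-j+1}{j}\right].$$
   Context: $(x)_j=x(x-1)\cdots(x-j+1)$, $(x)_0=1$. Stirling numbers of the second kind $\left\{ {n \atop r}\right\}$ are used in the extended sense for all integers: usual values for $n,r\ge0$; $\left\{ {n \atop r}\right\}=\left[{-r\atop -n}\right]$ (unsigned Stirling number of the first kind) for $n,r\le0$; and $0$ when one of $n,r$ is positive and the other negative. Binomial coefficients are extended to all integers (Kronenburg's convention): $\binom{n}{r}=n(n-1)\cdots(n-r+1)/r!$ if $r\ge0$; $\binom{n}{r}=(-1)^{n-r}\binom{-r-1}{n-r}$ if $r\le n<0$; $0$ otherwise. *)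

theory Defs
  imports Complex_Main "HOL-Combinatorics.Stirling"
begin

definition falling_fact :: "int \<Rightarrow> nat \<Rightarrow> int" where
  "falling_fact x j = (\<Prod>i<j. x - int i)"

definition Stirling2_ext :: "int \<Rightarrow> int \<Rightarrow> int" where
  "Stirling2_ext n r =
     (if n \<ge> 0 \<and> r \<ge> 0 then int (Stirling (nat n) (nat r))
      else if n \<le> 0 \<and> r \<le> 0 then int (stirling (nat (- r)) (nat (- n)))
      else 0)"

text \<open>Binomial coefficients extended to all integers (Kronenburg's convention);
  the division by r! is exact.\<close>
definition binom_ext :: "int \<Rightarrow> int \<Rightarrow> int" where
  "binom_ext n r =
     (if r \<ge> 0 then falling_fact n (nat r) div fact (nat r)
      else if r \<le> n \<and> n < 0 then (-1) ^ nat (n - r) * (falling_fact (- r - 1) (nat (n - r)) div fact (nat (n - r)))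
      else 0)"

definition anassa_count :: "nat \<Rightarrow> nat \<Rightarrow> nat" where
  "anassa_count m k = card {A. A \<subseteq> {1..int m} \<times> {1..int m} \<and> card A = k \<and>
      (\<forall>i j i' j'. (i, j) \<in> A \<longrightarrow> (i', j') \<in> A \<longrightarrow> (i, j) \<noteq> (i', j') \<longrightarrow>
          i \<noteq> i' \<and> i - j \<noteq> i' - j')}"

end

theory Submission
  imports Defs
begin

fun EE :: "nat \<Rightarrow> nat \<Rightarrow> int \<Rightarrow> int" where
  "EE 0 i d = (if i = 0 \<and> d = -1 then 1 else 0)"
| "EE (Suc 0) i d = (if i = 0 \<and> d = 0 then 1 else 0)"
| "EE (Suc (Suc n)) i d = EE (Suc n) i d + EE (Suc n) i (d-1) + (if i = 0 then 0 else EE n (i-1) (d-1))"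

definition XX :: "nat \<Rightarrow> nat \<Rightarrow> int \<Rightarrow> int" where
  "XX k i d = int i * EE (k+2) i d + int (i+1) * EE (k+2) (i+1) d
     - (EE (k+1) i d + (int k + 1 - d) * (EE (k+1) i (d-1) + (if i = 0 then 0 else EE k (i-1) (d-1))))"

lemma XX_0: "XX 0 i d = 0"
  by (cases i) (auto simp: XX_def)

lemma XX_1: "XX 1 i d = 0"
proof (cases i)
  case 0 then show ?thesis by (auto simp: XX_def numeral_2_eq_2)
next
  case (Suc i') then show ?thesis
    by (cases i') (auto simp: XX_def numeral_2_eq_2 algebra_simps)
qed

lemma XX_rec: "XX (Suc (Suc k)) i d = XX (Suc k) i d + XX (Suc k) i (d-1) + (if i = 0 then 0 else XX k (i-1) (d-1))"
  by (cases i) (auto simp: XX_def algebra_simps numeral_2_eq_2)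

lemma XX_zero: "XX k i d = 0"
proof (induction k arbitrary: i d rule: less_induct)
  case (less k)
  show ?case
  proof (cases k)
    case 0 then show ?thesis by (simp add: XX_0)
  next
    case (Suc k') note k' = this
    show ?thesis
    proof (cases k')
      case 0 then show ?thesis using k' XX_1 by simp
    next
      case (Suc k'') then show ?thesis using k' less XX_rec by simp
    qed
  qed
qed

definition G :: "nat \<Rightarrow> nat \<Rightarrow> nat \<Rightarrow> int" where
  "G m p j = int (pochhammer (Suc p) j * Stirling m (p+j))"

lemma G_vanish: "m < p + j \<Longrightarrow> G m p j = 0"
  by (simp add: G_def)

lemma G_Suc0: "G (Suc m) p 0 = int p * G m p 0 + (if p = 0 then 0 else int (Stirling m (p-1)))"
  by (cases p) (simp_all add: G_def algebra_simps)

lemma G_Suc: "G (Suc m) p (Suc j) = (int p + int j + 1) * (G m p (Suc j) + G m p j)"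
proof -
  have "Stirling (Suc m) (p + Suc j) = Suc (p+j) * Stirling m (Suc (p+j)) + Stirling m (p+j)"
    by simp
  then show ?thesis
    by (simp add: G_def pochhammer_Suc algebra_simps)
qed

lemma G_down: "G m p (Suc j) = (int p + 1) * G m (Suc p) j"
  by (simp add: G_def pochhammer_rec algebra_simps)

definition Phi :: "nat \<Rightarrow> nat \<Rightarrow> int \<Rightarrow> int" where
  "Phi m k d = (if k \<le> m then (\<Sum>j\<le>m. G m (m-k) j * EE (k+1) j d) else 0)"

lemma EE_rec2: "EE (Suc (Suc n)) i d = EE (Suc n) i d + EE (Suc n) i (d-1) + (if i = 0 then 0 else EE n (i-1) (d-1))"
  by simp

lemma termwise:
  fixes p k0 m :: nat and d :: int
  assumes "m = p + k0"
  shows "(int p + int i) * EE (k0+2) i d + (int p + int i + 1) * EE (k0+2) (i+1) d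
    = int p * EE (k0+2) (i+1) d + (int p + 1) * EE (k0+1) i d
      + (int m + 1 - d) * (EE (k0+1) i (d-1) + (if i = 0 then 0 else EE k0 (i-1) (d-1)))"
proof -
  have X: "XX k0 i d = 0" by (rule XX_zero)
  have I: "EE (k0+2) i d = EE (k0+1) i d + EE (k0+1) i (d-1) + (if i = 0 then 0 else EE k0 (i-1) (d-1))"
    using EE_rec2[of k0 i d] by (simp add: numeral_2_eq_2)
  show ?thesis using X I assms unfolding XX_def by (simp add: algebra_simps)
qed

lemma Phi_rec:
  assumes "k \<ge> 1"
  shows "Phi (Suc m) k d = Phi m k d + (int m + 2 - int k) * Phi m (k-1) d
     + (int m + 1 - d) * Phi m (k-1) (d-1)
     + (if k \<ge> 2 then (int m + 2 - int k) * (int m + 1 - d) * Phi m (k-2) (d-1) else 0)"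
proof (cases "k \<le> Suc m")
  case False
  then show ?thesis by (auto simp: Phi_def)
next
  case True
  obtain k0 where k: "k = Suc k0" using assms by (cases k) auto
  have k0m: "k0 \<le> m" using True k by simp
  define p where "p = m - k0"
  have mp: "m = p + k0" using k0m p_def by simp
  define g where "g i = G m p i" for i
  define s where "s = (if p = 0 then 0 else int (Stirling m (p-1)))"
  define E2 where "E2 i e = EE (k0+2) i e" for i e
  define E1 where "E1 i e = EE (k0+1) i e" for i e
  define E0 where "E0 i e = (if i = 0 then 0 else EE k0 (i-1) e)" for i e
  have gm: "g (Suc m) = 0" by (simp add: g_def G_vanish)
  have L: "Phi (Suc m) k d = s * E2 0 d + (\<Sum>i\<le>m. g i * ((int p + int i) * E2 i d + (int p + int i + 1) * E2 (i+1) d))"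
  proof -
    have "Phi (Suc m) k d = (\<Sum>j\<le>Suc m. G (Suc m) p j * E2 j d)"
      using True by (simp add: Phi_def k p_def E2_def)
    also have "\<dots> = G (Suc m) p 0 * E2 0 d + (\<Sum>j\<le>m. G (Suc m) p (Suc j) * E2 (Suc j) d)"
      by (rule sum.atMost_Suc_shift)
    also have "\<dots> = (int p * g 0 + s) * E2 0 d + (\<Sum>j\<le>m. (int p + int j + 1) * (g (Suc j) + g j) * E2 (Suc j) d)"
      by (simp add: G_Suc0 G_Suc g_def s_def)
    also have "\<dots> = s * E2 0 d + ((int p * g 0 * E2 0 d + (\<Sum>j\<le>m. (int p + int (Suc j)) * g (Suc j) * E2 (Suc j) d))
          + (\<Sum>j\<le>m. (int p + int j + 1) * g j * E2 (Suc j) d))"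
      by (simp add: algebra_simps sum.distrib)
    also have "int p * g 0 * E2 0 d + (\<Sum>j\<le>m. (int p + int (Suc j)) * g (Suc j) * E2 (Suc j) d)
        = (\<Sum>j\<le>Suc m. (int p + int j) * g j * E2 j d)"
      by (subst sum.atMost_Suc_shift) simp
    also have "\<dots> = (\<Sum>j\<le>m. (int p + int j) * g j * E2 j d)"
      by (simp add: gm)
    finally show ?thesis
      by (simp add: algebra_simps sum.distrib sum_distrib_left)
  qed
  have T1: "Phi m k d = s * E2 0 d + (\<Sum>i\<le>m. g i * (int p * E2 (i+1) d))"
  proof (cases "p = 0")
    case True
    then show ?thesis using mp k by (simp add: Phi_def s_def)
  next
    case False
    define m' where "m' = m - 1"
    have m': "m = Suc m'" using False mp m'_def by simp
    have km: "k \<le> m" using False mp k by simp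
    have "Phi m k d = (\<Sum>j\<le>Suc m'. G m (p-1) j * E2 j d)"
      using km m' by (simp add: Phi_def E2_def k p_def)
    also have "\<dots> = G m (p-1) 0 * E2 0 d + (\<Sum>j\<le>m'. G m (p-1) (Suc j) * E2 (Suc j) d)"
      by (rule sum.atMost_Suc_shift)
    also have "\<dots> = s * E2 0 d + (\<Sum>j\<le>m'. g j * (int p * E2 (j+1) d))"
    proof -
      have gd: "G m (p-1) (Suc j) = int p * g j" for j
        using False G_down[of m "p-1" j] by (simp add: g_def of_nat_diff)
      have g0: "G m (p-1) 0 = s" using False by (simp add: G_def s_def)
      show ?thesis unfolding gd g0 by (simp add: algebra_simps)
    qed
    also have "(\<Sum>j\<le>m'. g j * (int p * E2 (j+1) d)) = (\<Sum>j\<le>m. g j * (int p * E2 (j+1) d))"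
      using False m' by (simp add: g_def G_vanish)
    finally show ?thesis .
  qed
  have T2: "Phi m (k-1) d = (\<Sum>i\<le>m. g i * E1 i d)"
    using k0m by (simp add: Phi_def k g_def E1_def p_def)
  have T3: "Phi m (k-1) (d-1) = (\<Sum>i\<le>m. g i * E1 i (d-1))"
    using k0m by (simp add: Phi_def k g_def E1_def p_def)
  have T4: "(if k \<ge> 2 then (int m + 2 - int k) * Phi m (k-2) (d-1) else 0) = (\<Sum>i\<le>m. g i * E0 i (d-1))"
  proof -
    have "(\<Sum>i\<le>Suc m. g i * E0 i (d-1)) = (\<Sum>j\<le>m. g (Suc j) * EE k0 j (d-1))"
      by (subst sum.atMost_Suc_shift) (simp add: E0_def)
    also have "\<dots> = (if k \<ge> 2 then (int m + 2 - int k) * Phi m (k-2) (d-1) else 0)"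
    proof (cases "k \<ge> 2")
      case True
      then obtain k1 where k1: "k0 = Suc k1" using k by (cases k0) auto
      have "Phi m (k-2) (d-1) = (\<Sum>j\<le>m. G m (Suc p) j * EE k0 j (d-1))"
        using k0m k k1 mp by (simp add: Phi_def)
      moreover have w: "int m + 2 - int k = int p + 1" using mp k by simp
      ultimately show ?thesis using True
        unfolding w by (simp add: sum_distrib_left g_def G_down mult.assoc)
    next
      case False
      then have "k0 = 0" using k by simp
      then show ?thesis using mp False
        by (auto intro!: sum.neutral simp: g_def G_vanish)
    qed
    finally show ?thesis by (simp add: gm)
  qed
  have main: "Phi (Suc m) k d = Phi m k d + (int p + 1) * Phi m (k-1) d
     + (int m + 1 - d) * Phi m (k-1) (d-1)
     + (int m + 1 - d) * (if k \<ge> 2 then (int m + 2 - int k) * Phi m (k-2) (d-1) else 0)"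
  proof -
    have "Phi m k d + (int p + 1) * Phi m (k-1) d
     + (int m + 1 - d) * Phi m (k-1) (d-1)
     + (int m + 1 - d) * (if k \<ge> 2 then (int m + 2 - int k) * Phi m (k-2) (d-1) else 0)
     = s * E2 0 d + (\<Sum>i\<le>m. g i * (int p * E2 (i+1) d + (int p + 1) * E1 i d
         + (int m + 1 - d) * (E1 i (d-1) + E0 i (d-1))))"
      unfolding T1 T2 T3 T4 by (simp add: algebra_simps sum.distrib sum_subtractf sum_distrib_left)
    also have "\<dots> = Phi (Suc m) k d"
      unfolding L
      using termwise[OF mp] by (simp add: E2_def E1_def E0_def)
    finally show ?thesis by simp
  qed
  have w: "int m + 2 - int k = int p + 1" using mp k by simp
  show ?thesis using main unfolding w by (cases "k \<ge> 2") (simp_all add: algebra_simps)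
qed

definition avalid :: "nat \<Rightarrow> (int \<times> int) set \<Rightarrow> bool" where
  "avalid m A \<longleftrightarrow> A \<subseteq> {1..int m} \<times> {1..int m} \<and>
      (\<forall>i j i' j'. (i, j) \<in> A \<longrightarrow> (i', j') \<in> A \<longrightarrow> (i, j) \<noteq> (i', j') \<longrightarrow>
          i \<noteq> i' \<and> i - j \<noteq> i' - j')"

lemma anassa_count_avalid: "anassa_count m k = card {A. avalid m A \<and> card A = k}"
  unfolding anassa_count_def avalid_def by (rule arg_cong[where f=card]) blast

definition dn :: "(int \<times> int) set \<Rightarrow> nat" where
  "dn A = card {c\<in>A. snd c < fst c}"

definition phi :: "int \<times> int \<Rightarrow> int \<times> int" where
  "phi c = (if snd c < fst c then c else (fst c, snd c + 1))"

definition psi :: "int \<times> int \<Rightarrow> int \<times> int" where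
  "psi c = (if snd c < fst c then c else (fst c, snd c - 1))"

definition New :: "nat \<Rightarrow> (int \<times> int) set" where
  "New m = {c. fst c = int m + 1 \<or> fst c = snd c}"

lemma avalid_finite: "avalid m A \<Longrightarrow> finite A"
  unfolding avalid_def by (meson finite_SigmaI finite_atLeastAtMost_int finite_subset)


lemma avalid_iff: "avalid m A \<longleftrightarrow> A \<subseteq> {1..int m} \<times> {1..int m} \<and>
   (\<forall>c\<in>A. \<forall>c'\<in>A. c \<noteq> c' \<longrightarrow> fst c \<noteq> fst c' \<and> fst c - snd c \<noteq> fst c' - snd c')"
  unfolding avalid_def Ball_def split_paired_All by simp

lemma avalid_pair: "avalid m A \<Longrightarrow> c \<in> A \<Longrightarrow> c' \<in> A \<Longrightarrow> c \<noteq> c' \<Longrightarrow>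
   fst c \<noteq> fst c' \<and> fst c - snd c \<noteq> fst c' - snd c'"
  unfolding avalid_iff by blast

lemma inj_phi: "inj phi"
  unfolding inj_def phi_def by (auto split: if_splits simp: prod_eq_iff)

lemma phi_fst[simp]: "fst (phi c) = fst c"
  by (simp add: phi_def)

lemma phi_down: "(snd (phi c) < fst (phi c)) = (snd c < fst c)"
  by (simp add: phi_def)

lemma avalid_phi: "avalid m Y \<Longrightarrow> avalid (Suc m) (phi ` Y)"
  unfolding avalid_iff
proof (rule conjI, goal_cases)
  case 1
  assume a: "Y \<subseteq> {1..int m} \<times> {1..int m} \<and> (\<forall>c\<in>Y. \<forall>c'\<in>Y. c \<noteq> c' \<longrightarrow> fst c \<noteq> fst c' \<and> fst c - snd c \<noteq> fst c' - snd c')"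
  show "phi ` Y \<subseteq> {1..int (Suc m)} \<times> {1..int (Suc m)}"
    using a by (auto simp: phi_def)
next
  case 2
  assume a: "Y \<subseteq> {1..int m} \<times> {1..int m} \<and> (\<forall>c\<in>Y. \<forall>c'\<in>Y. c \<noteq> c' \<longrightarrow> fst c \<noteq> fst c' \<and> fst c - snd c \<noteq> fst c' - snd c')"
  show ?case
  proof (intro ballI impI)
  fix x x' assume x: "x \<in> phi ` Y" and x': "x' \<in> phi ` Y" and ne: "x \<noteq> x'"
  obtain c where c: "c \<in> Y" "x = phi c" using x by auto
  obtain c' where c': "c' \<in> Y" "x' = phi c'" using x' by auto
  have "c \<noteq> c'" using ne c c' by auto
  then have h: "fst c \<noteq> fst c' \<and> fst c - snd c \<noteq> fst c' - snd c'" using a c c' by blast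
  show "fst x \<noteq> fst x' \<and> fst x - snd x \<noteq> fst x' - snd x'"
    using h c c' by (auto simp: phi_def)
  qed
qed

lemma phi_New: "avalid m Y \<Longrightarrow> phi ` Y \<inter> New m = {}"
  unfolding avalid_def New_def phi_def by (force split: if_splits)

lemma card_phi: "card (phi ` Y) = card Y"
  by (metis card_image inj_phi inj_on_subset subset_UNIV)

lemma dn_phi: "dn (phi ` Y) = dn Y"
proof -
  have "{c \<in> phi ` Y. snd c < fst c} = phi ` {c\<in>Y. snd c < fst c}"
    using phi_down by (auto simp del: phi_fst)
  then show ?thesis unfolding dn_def using inj_phi
    by (simp add: card_image inj_on_def inj_def)
qed

lemma psi_phi: "psi (phi c) = c"
  by (auto simp: phi_def psi_def)

lemma phi_psi: "fst c \<noteq> snd c \<Longrightarrow> phi (psi c) = c"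
  by (auto simp: phi_def psi_def)

lemma avalid_psi:
  assumes "avalid (Suc m) X"
  shows "avalid m (psi ` (X - New m))" "phi ` (psi ` (X - New m)) = X - New m"
proof -
  have sub: "X \<subseteq> {1..int (Suc m)} \<times> {1..int (Suc m)}" using assms by (simp only: avalid_def)
  have pr: "\<And>c c'. c \<in> X \<Longrightarrow> c' \<in> X \<Longrightarrow> c \<noteq> c' \<Longrightarrow> fst c \<noteq> fst c' \<and> fst c - snd c \<noteq> fst c' - snd c'"
    using assms avalid_pair by blast
  show "phi ` (psi ` (X - New m)) = X - New m"
  proof -
    have "phi ` (psi ` (X - New m)) = (phi \<circ> psi) ` (X - New m)" by (simp add: image_comp)
    also have "\<dots> = X - New m"
      by (rule image_cong[THEN trans, OF refl, of _ _ id]) (auto simp: New_def phi_psi)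
    finally show ?thesis .
  qed
  show "avalid m (psi ` (X - New m))"
    unfolding avalid_iff
  proof (rule conjI)
    show "psi ` (X - New m) \<subseteq> {1..int m} \<times> {1..int m}"
    proof
      fix x assume "x \<in> psi ` (X - New m)"
      then obtain c where c: "c \<in> X" "c \<notin> New m" "x = psi c" by auto
      then show "x \<in> {1..int m} \<times> {1..int m}" using sub
        by (cases c) (auto simp: psi_def New_def)
    qed
    show "\<forall>x\<in>psi ` (X - New m). \<forall>x'\<in>psi ` (X - New m). x \<noteq> x' \<longrightarrow> fst x \<noteq> fst x' \<and> fst x - snd x \<noteq> fst x' - snd x'"
    proof (intro ballI impI)
    fix x x' assume x: "x \<in> psi ` (X - New m)" and x': "x' \<in> psi ` (X - New m)" and ne: "x \<noteq> x'"
    obtain c where c: "c \<in> X" "c \<notin> New m" "x = psi c" using x by auto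
    obtain c' where c': "c' \<in> X" "c' \<notin> New m" "x' = psi c'" using x' by auto
    have "c \<noteq> c'" using ne c c' by auto
    then have h: "fst c \<noteq> fst c' \<and> fst c - snd c \<noteq> fst c' - snd c'" using pr c c' by blast
    show "fst x \<noteq> fst x' \<and> fst x - snd x \<noteq> fst x' - snd x'"
      using h c c' by (auto simp: psi_def New_def)
    qed
  qed
qed

definition VS :: "nat \<Rightarrow> (int \<times> int) set set" where
  "VS m = {A. avalid m A}"

definition Ext :: "nat \<Rightarrow> (int \<times> int) set \<Rightarrow> (int \<times> int) set set" where
  "Ext m Y = {Z. Z \<subseteq> New m \<and> avalid (Suc m) (phi ` Y \<union> Z)}"

lemma finite_VS: "finite (VS m)"
proof -
  have "VS m \<subseteq> Pow ({1..int m} \<times> {1..int m})" by (auto simp: VS_def avalid_def)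
  then show ?thesis by (rule finite_subset) simp
qed

lemma finite_Ext: "finite (Ext m Y)"
proof -
  have "Ext m Y \<subseteq> Pow ({1..int (Suc m)} \<times> {1..int (Suc m)})" by (auto simp: Ext_def avalid_def)
  then show ?thesis by (rule finite_subset) simp
qed

lemma sum_decomp:
  "(\<Sum>X\<in>VS (Suc m). f X) = (\<Sum>Y\<in>VS m. \<Sum>Z\<in>Ext m Y. f (phi ` Y \<union> Z))"
proof -
  define gg where "gg = (\<lambda>(Y, Z). phi ` Y \<union> Z)"
  have inj: "inj_on gg (Sigma (VS m) (Ext m))"
  proof (rule inj_onI)
    fix p q
    assume p: "p \<in> Sigma (VS m) (Ext m)" and q: "q \<in> Sigma (VS m) (Ext m)"
      and eqpq: "gg p = gg q"
    obtain Y Z where pz: "p = (Y, Z)" by (cases p)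
    obtain Y' Z' where qz: "q = (Y', Z')" by (cases q)
    have Y: "(Y, Z) \<in> Sigma (VS m) (Ext m)" and Y': "(Y', Z') \<in> Sigma (VS m) (Ext m)"
      and eq: "gg (Y, Z) = gg (Y', Z')" using p q eqpq pz qz by auto
    have aY: "avalid m Y" "Z \<subseteq> New m" using Y by (auto simp: VS_def Ext_def)
    have aY': "avalid m Y'" "Z' \<subseteq> New m" using Y' by (auto simp: VS_def Ext_def)
    have e: "phi ` Y \<union> Z = phi ` Y' \<union> Z'" using eq by (simp add: gg_def)
    have d1: "phi ` Y \<inter> New m = {}" "phi ` Y' \<inter> New m = {}" using aY(1) aY'(1) phi_New by auto
    have "Z = (phi ` Y \<union> Z) \<inter> New m" using d1 aY by blast
    also have "\<dots> = (phi ` Y' \<union> Z') \<inter> New m" using e by simp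
    also have "\<dots> = Z'" using d1 aY' by blast
    finally have zz: "Z = Z'" .
    have "phi ` Y = (phi ` Y \<union> Z) - New m" using d1 aY by blast
    also have "\<dots> = (phi ` Y' \<union> Z') - New m" using e by simp
    also have "\<dots> = phi ` Y'" using d1 aY' by blast
    finally have "phi ` Y = phi ` Y'" .
    then have "Y = Y'" using inj_phi by (simp add: inj_image_eq_iff)
    then show "p = q" using zz pz qz by simp
  qed
  have img: "gg ` (Sigma (VS m) (Ext m)) = VS (Suc m)"
  proof
    show "gg ` (Sigma (VS m) (Ext m)) \<subseteq> VS (Suc m)"
      unfolding gg_def VS_def Ext_def by (clarsimp)
    show "VS (Suc m) \<subseteq> gg ` (Sigma (VS m) (Ext m))"
    proof
      fix X assume X: "X \<in> VS (Suc m)"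
      then have aX: "avalid (Suc m) X" by (simp add: VS_def)
      define Y where "Y = psi ` (X - New m)"
      define Z where "Z = X \<inter> New m"
      have Y1: "avalid m Y" "phi ` Y = X - New m" using avalid_psi[OF aX] by (auto simp: Y_def)
      have XX: "X = phi ` Y \<union> Z" using Y1 by (auto simp: Z_def)
      have yv: "Y \<in> VS m" using Y1 by (simp add: VS_def)
      have "avalid (Suc m) (phi ` Y \<union> Z)" using aX XX by simp
      then have zv: "Z \<in> Ext m Y" unfolding Ext_def Z_def by simp
      have "(Y, Z) \<in> Sigma (VS m) (Ext m)" using yv zv by simp
      moreover have "X = gg (Y, Z)" using XX by (simp add: gg_def)
      ultimately show "X \<in> gg ` (Sigma (VS m) (Ext m))" by blast
    qed
  qed
  have "(\<Sum>Y\<in>VS m. \<Sum>Z\<in>Ext m Y. f (phi ` Y \<union> Z)) = (\<Sum>p\<in>Sigma (VS m) (Ext m). f (gg p))"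
    by (subst sum.Sigma) (auto simp: finite_VS finite_Ext gg_def split_beta)
  also have "\<dots> = (\<Sum>X\<in>gg ` (Sigma (VS m) (Ext m)). f X)"
    using inj by (simp add: sum.reindex)
  also have "\<dots> = (\<Sum>X\<in>VS (Suc m). f X)" using img by simp
  finally show ?thesis by simp
qed

definition FR :: "nat \<Rightarrow> (int \<times> int) set \<Rightarrow> int set" where
  "FR m Y = {i \<in> {1..int m}. \<forall>c\<in>Y. fst c \<noteq> i}"

definition FD :: "nat \<Rightarrow> (int \<times> int) set \<Rightarrow> int set" where
  "FD m Y = {j \<in> {1..int m}. \<forall>c\<in>Y. fst c - snd c \<noteq> int m + 1 - j}"

lemma avalid_union: "avalid n (A \<union> B) \<longleftrightarrow> avalid n A \<and> avalid n B \<and>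
   (\<forall>a\<in>A. \<forall>b\<in>B. a \<noteq> b \<longrightarrow> fst a \<noteq> fst b \<and> fst a - snd a \<noteq> fst b - snd b)"
  (is "?L \<longleftrightarrow> ?R")
proof
  assume L: ?L
  show ?R
  proof (intro conjI)
    show "avalid n A" using L unfolding avalid_iff by (meson UnCI le_sup_iff)
    show "avalid n B" using L unfolding avalid_iff by (meson UnCI le_sup_iff)
    show "\<forall>a\<in>A. \<forall>b\<in>B. a \<noteq> b \<longrightarrow> fst a \<noteq> fst b \<and> fst a - snd a \<noteq> fst b - snd b"
      using L unfolding avalid_iff by (meson UnCI)
  qed
next
  assume R: ?R
  then have a: "avalid n A" and b: "avalid n B"
    and c: "\<And>a b. a \<in> A \<Longrightarrow> b \<in> B \<Longrightarrow> a \<noteq> b \<Longrightarrow> fst a \<noteq> fst b \<and> fst a - snd a \<noteq> fst b - snd b"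
    by auto
  show ?L unfolding avalid_iff
  proof (rule conjI)
    show "A \<union> B \<subseteq> {1..int n} \<times> {1..int n}" using a b by (simp add: avalid_def)
  next
    show "\<forall>x\<in>A \<union> B. \<forall>y\<in>A \<union> B. x \<noteq> y \<longrightarrow> fst x \<noteq> fst y \<and> fst x - snd x \<noteq> fst y - snd y"
    proof (intro ballI impI)
    fix x y assume x: "x \<in> A \<union> B" and y: "y \<in> A \<union> B" and ne: "x \<noteq> y"
    show "fst x \<noteq> fst y \<and> fst x - snd x \<noteq> fst y - snd y"
    proof (cases "x \<in> A")
      case True
      show ?thesis
      proof (cases "y \<in> A")
        case True then show ?thesis using \<open>x \<in> A\<close> ne a avalid_pair by blast
      next
        case False then show ?thesis using \<open>x \<in> A\<close> y ne c by blast
      qed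
    next
      case False
      then have xB: "x \<in> B" using x by blast
      show ?thesis
      proof (cases "y \<in> A")
        case True then have "fst y \<noteq> fst x \<and> fst y - snd y \<noteq> fst x - snd x" using xB ne c by metis
        then show ?thesis by metis
      next
        case False then show ?thesis using xB y ne b avalid_pair by blast
      qed
    qed
  qed
  qed
qed

lemma phi_diag: "fst (phi c) - snd (phi c) = (if snd c < fst c then fst c - snd c else fst c - snd c - 1)"
  by (simp add: phi_def)

lemma Ext_sub:
  assumes Y: "avalid m Y" and Z: "Z \<in> Ext m Y"
  shows "Z \<in> {{}} \<union> (\<lambda>i. {(i,i)}) ` insert (int m+1) (FR m Y) \<union> (\<lambda>j. {(int m+1, j)}) ` FD m Y
     \<union> (\<lambda>(i,j). {(i,i), (int m+1,j)}) ` (FR m Y \<times> FD m Y)"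
proof -
  have ZN: "Z \<subseteq> New m" and aU: "avalid (Suc m) (phi ` Y \<union> Z)" using Z by (auto simp: Ext_def)
  have aZ: "avalid (Suc m) Z" and cross: "\<And>a b. a \<in> phi ` Y \<Longrightarrow> b \<in> Z \<Longrightarrow> a \<noteq> b \<Longrightarrow> fst a \<noteq> fst b \<and> fst a - snd a \<noteq> fst b - snd b"
    using aU avalid_union by blast+
  have disj: "phi ` Y \<inter> New m = {}" using phi_New[OF Y] .
  have cross2: "\<And>c b. c \<in> Y \<Longrightarrow> b \<in> Z \<Longrightarrow> fst c \<noteq> fst b \<and> fst (phi c) - snd (phi c) \<noteq> fst b - snd b"
  proof -
    fix c b assume c: "c \<in> Y" and b: "b \<in> Z"
    have "phi c \<noteq> b" using disj ZN c b by blast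
    then show "fst c \<noteq> fst b \<and> fst (phi c) - snd (phi c) \<noteq> fst b - snd b" using cross[of "phi c" b] c b by auto
  qed
  have Zsub: "Z \<subseteq> {1..int m + 1} \<times> {1..int m + 1}" using aZ by (simp add: avalid_def add.commute)
  have Ycells: "Y \<subseteq> {1..int m} \<times> {1..int m}" using Y by (simp add: avalid_def)
  have pz: "\<And>a b. a \<in> Z \<Longrightarrow> b \<in> Z \<Longrightarrow> a \<noteq> b \<Longrightarrow> fst a \<noteq> fst b \<and> fst a - snd a \<noteq> fst b - snd b"
    using aZ avalid_pair by blast
  have form: "\<And>z. z \<in> Z \<Longrightarrow> (\<exists>i. z = (i,i)) \<or> (\<exists>j. z = (int m + 1, j) \<and> j \<noteq> int m + 1)"
    using ZN by (auto simp: New_def)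
  have ud: "\<And>i i'. (i,i) \<in> Z \<Longrightarrow> (i',i') \<in> Z \<Longrightarrow> i = i'"
    using pz by fastforce
  have ur: "\<And>j j'. (int m + 1, j) \<in> Z \<Longrightarrow> (int m + 1, j') \<in> Z \<Longrightarrow> j = j'"
    using pz by fastforce
  have diagFR: "i \<in> insert (int m+1) (FR m Y)" if "(i,i) \<in> Z" for i
  proof -
    have "i \<in> {1..int m + 1}" using that Zsub by auto
    moreover have "\<forall>c\<in>Y. fst c \<noteq> i" using cross2 that by fastforce
    ultimately show ?thesis by (auto simp: FR_def)
  qed
  have rowFD: "j \<in> FD m Y" if "(int m + 1, j) \<in> Z" "j \<noteq> int m + 1" for j
  proof -
    have j: "j \<in> {1..int m}" using that Zsub by auto
    have "\<forall>c\<in>Y. fst c - snd c \<noteq> int m + 1 - j"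
    proof
      fix c assume c: "c \<in> Y"
      have h: "fst (phi c) - snd (phi c) \<noteq> int m + 1 - j" using cross2[OF c that(1)] by simp
      show "fst c - snd c \<noteq> int m + 1 - j"
      proof (cases "snd c < fst c")
        case True then show ?thesis using h by (simp add: phi_def)
      next
        case False then show ?thesis using j by auto
      qed
    qed
    then show ?thesis using j by (simp add: FD_def)
  qed
  show ?thesis
  proof (cases "\<exists>i. (i,i) \<in> Z")
    case True
    then obtain i where i: "(i,i) \<in> Z" by blast
    show ?thesis
    proof (cases "\<exists>j. (int m + 1, j) \<in> Z \<and> j \<noteq> int m + 1")
      case True
      then obtain j where j: "(int m + 1, j) \<in> Z" "j \<noteq> int m + 1" by blast
      have "Z \<subseteq> {(i,i), (int m + 1, j)}"
      proof
        fix z assume z: "z \<in> Z"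
        from form[OF z] show "z \<in> {(i,i), (int m + 1, j)}"
        proof
          assume "\<exists>i'. z = (i',i')"
          then obtain i' where "z = (i',i')" by blast
          then show ?thesis using ud[OF _ i] z by simp
        next
          assume "\<exists>j'. z = (int m + 1, j') \<and> j' \<noteq> int m + 1"
          then obtain j' where "z = (int m + 1, j')" by blast
          then show ?thesis using ur[OF _ j(1)] z by simp
        qed
      qed
      then have ZZ: "Z = {(i,i), (int m + 1, j)}" using i j by blast
      have "i \<noteq> int m + 1" using pz[OF i j(1)] j(2) by auto
      then have "i \<in> FR m Y" using diagFR[OF i] by simp
      moreover have "j \<in> FD m Y" using rowFD j by simp
      ultimately have "(i, j) \<in> FR m Y \<times> FD m Y" by simp
      then have "Z \<in> (\<lambda>(i,j). {(i,i), (int m+1,j)}) ` (FR m Y \<times> FD m Y)"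
        unfolding ZZ by (rule rev_image_eqI) simp
      then show ?thesis by blast
    next
      case False
      have "Z \<subseteq> {(i,i)}"
      proof
        fix z assume z: "z \<in> Z"
        from form[OF z] show "z \<in> {(i,i)}"
        proof
          assume "\<exists>i'. z = (i',i')"
          then obtain i' where "z = (i',i')" by blast
          then show ?thesis using ud[OF _ i] z by simp
        next
          assume "\<exists>j'. z = (int m + 1, j') \<and> j' \<noteq> int m + 1"
          then show ?thesis using False z by blast
        qed
      qed
      then have ZZ: "Z = {(i,i)}" using i by blast
      have "Z \<in> (\<lambda>i. {(i,i)}) ` insert (int m+1) (FR m Y)"
        unfolding ZZ using diagFR[OF i] by (rule rev_image_eqI) simp
      then show ?thesis by blast
    qed
  next
    case noD: False
    show ?thesis
    proof (cases "\<exists>j. (int m + 1, j) \<in> Z \<and> j \<noteq> int m + 1")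
      case True
      then obtain j where j: "(int m + 1, j) \<in> Z" "j \<noteq> int m + 1" by blast
      have "Z \<subseteq> {(int m + 1, j)}"
      proof
        fix z assume z: "z \<in> Z"
        from form[OF z] show "z \<in> {(int m + 1, j)}"
        proof
          assume "\<exists>i'. z = (i',i')"
          then show ?thesis using noD z by blast
        next
          assume "\<exists>j'. z = (int m + 1, j') \<and> j' \<noteq> int m + 1"
          then obtain j' where "z = (int m + 1, j')" by blast
          then show ?thesis using ur[OF _ j(1)] z by simp
        qed
      qed
      then have ZZ: "Z = {(int m + 1, j)}" using j by blast
      have "Z \<in> (\<lambda>j. {(int m+1, j)}) ` FD m Y"
        unfolding ZZ using rowFD[OF j] by (rule rev_image_eqI) simp
      then show ?thesis by blast
    next
      case False
      have "Z = {}"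
      proof (rule ccontr)
        assume "Z \<noteq> {}"
        then obtain z where z: "z \<in> Z" by blast
        from form[OF z] show False using noD False z by blast
      qed
      then show ?thesis by simp
    qed
  qed
qed

lemma Ext_sup:
  assumes Y: "avalid m Y"
  shows "{{}} \<union> (\<lambda>i. {(i,i)}) ` insert (int m+1) (FR m Y) \<union> (\<lambda>j. {(int m+1, j)}) ` FD m Y
     \<union> (\<lambda>(i,j). {(i,i), (int m+1,j)}) ` (FR m Y \<times> FD m Y) \<subseteq> Ext m Y"
proof -
  have aP: "avalid (Suc m) (phi ` Y)" using avalid_phi[OF Y] .
  have Ycells: "Y \<subseteq> {1..int m} \<times> {1..int m}" using Y by (simp add: avalid_def)
  have dg: "fst (phi c) - snd (phi c) \<noteq> 0" for c by (simp add: phi_def)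
  have key: "Z \<in> Ext m Y" if Zn: "Z \<subseteq> New m" and aZ: "avalid (Suc m) Z"
     and cr: "\<And>c b. c \<in> Y \<Longrightarrow> b \<in> Z \<Longrightarrow> fst c \<noteq> fst b \<and> fst (phi c) - snd (phi c) \<noteq> fst b - snd b" for Z
  proof -
    have "avalid (Suc m) (phi ` Y \<union> Z)" unfolding avalid_union using aP aZ cr by fastforce
    then show ?thesis using Zn by (simp add: Ext_def)
  qed
  have e0: "{} \<in> Ext m Y" by (rule key) (auto simp: avalid_def)
  have e1: "{(i,i)} \<in> Ext m Y" if i: "i \<in> insert (int m+1) (FR m Y)" for i
  proof (rule key)
    show "{(i,i)} \<subseteq> New m" by (simp add: New_def)
    show "avalid (Suc m) {(i,i)}" using i by (auto simp: avalid_def FR_def)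
    fix c b assume c: "c \<in> Y" and b: "b \<in> {(i,i)}"
    have "fst c \<noteq> i" using i c Ycells by (auto simp: FR_def)
    then show "fst c \<noteq> fst b \<and> fst (phi c) - snd (phi c) \<noteq> fst b - snd b" using b dg[of c] by simp
  qed
  have e2: "{(int m+1, j)} \<in> Ext m Y" if j: "j \<in> FD m Y" for j
  proof (rule key)
    show "{(int m+1, j)} \<subseteq> New m" by (simp add: New_def)
    show "avalid (Suc m) {(int m+1, j)}" using j by (auto simp: avalid_def FD_def)
    fix c b assume c: "c \<in> Y" and b: "b \<in> {(int m+1, j)}"
    have "fst c \<noteq> int m + 1" using c Ycells by auto
    moreover have "fst (phi c) - snd (phi c) \<noteq> int m + 1 - j"
    proof (cases "snd c < fst c")
      case True then show ?thesis using j c by (auto simp: phi_def FD_def)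
    next
      case False then show ?thesis using j by (auto simp: phi_def FD_def)
    qed
    ultimately show "fst c \<noteq> fst b \<and> fst (phi c) - snd (phi c) \<noteq> fst b - snd b" using b by simp
  qed
  have e3: "{(i,i), (int m+1, j)} \<in> Ext m Y" if i: "i \<in> FR m Y" and j: "j \<in> FD m Y" for i j
  proof (rule key)
    show "{(i,i), (int m+1, j)} \<subseteq> New m" by (simp add: New_def)
    show "avalid (Suc m) {(i,i), (int m+1, j)}" using i j by (auto simp: avalid_def FR_def FD_def)
    fix c b assume c: "c \<in> Y" and b: "b \<in> {(i,i), (int m+1, j)}"
    have "fst c \<noteq> i" using i c by (auto simp: FR_def)
    moreover have "fst c \<noteq> int m + 1" using c Ycells by auto
    moreover have "fst (phi c) - snd (phi c) \<noteq> int m + 1 - j"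
    proof (cases "snd c < fst c")
      case True then show ?thesis using j c by (auto simp: phi_def FD_def)
    next
      case False then show ?thesis using j by (auto simp: phi_def FD_def)
    qed
    ultimately show "fst c \<noteq> fst b \<and> fst (phi c) - snd (phi c) \<noteq> fst b - snd b" using b dg[of c] by auto
  qed
  show ?thesis
  proof (intro Un_least)
    show "{{}} \<subseteq> Ext m Y" using e0 by simp
    show "(\<lambda>i. {(i,i)}) ` insert (int m+1) (FR m Y) \<subseteq> Ext m Y" using e1 by blast
    show "(\<lambda>j. {(int m+1, j)}) ` FD m Y \<subseteq> Ext m Y" using e2 by blast
    show "(\<lambda>(i,j). {(i,i), (int m+1,j)}) ` (FR m Y \<times> FD m Y) \<subseteq> Ext m Y"
    proof
      fix Z assume "Z \<in> (\<lambda>(i,j). {(i,i), (int m+1,j)}) ` (FR m Y \<times> FD m Y)"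
      then obtain i j where "i \<in> FR m Y" "j \<in> FD m Y" "Z = {(i,i), (int m+1,j)}" by blast
      then show "Z \<in> Ext m Y" using e3 by simp
    qed
  qed
qed

lemma Ext_eq:
  assumes Y: "avalid m Y"
  shows "Ext m Y = {{}} \<union> (\<lambda>i. {(i,i)}) ` insert (int m+1) (FR m Y) \<union> (\<lambda>j. {(int m+1, j)}) ` FD m Y
     \<union> (\<lambda>(i,j). {(i,i), (int m+1,j)}) ` (FR m Y \<times> FD m Y)"
  by (rule equalityI[OF subsetI Ext_sup[OF Y]]) (rule Ext_sub[OF Y])

lemma sum_Ext:
  assumes Y: "avalid m Y"
  shows "(\<Sum>Z\<in>Ext m Y. g Z) = g {} + (\<Sum>i\<in>insert (int m+1) (FR m Y). g {(i,i)})
     + (\<Sum>j\<in>FD m Y. g {(int m+1, j)}) + (\<Sum>p\<in>FR m Y \<times> FD m Y. g {(fst p, fst p), (int m+1, snd p)})"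
proof -
  define S1 where "S1 = (\<lambda>i. {(i,i)}) ` insert (int m+1) (FR m Y)"
  define S2 where "S2 = (\<lambda>j. {(int m+1, j)}) ` FD m Y"
  define S3 where "S3 = (\<lambda>(i,j). {(i,i), (int m+1,j)}) ` (FR m Y \<times> FD m Y)"
  have fFR: "finite (FR m Y)" unfolding FR_def by (rule finite_subset[of _ "{1..int m}"]) auto
  have fFD: "finite (FD m Y)" unfolding FD_def by (rule finite_subset[of _ "{1..int m}"]) auto
  have FRm: "i \<le> int m" if "i \<in> FR m Y" for i using that by (simp add: FR_def)
  have FDm: "j \<le> int m" if "j \<in> FD m Y" for j using that by (simp add: FD_def)
  have c1: "card Z = 1" if "Z \<in> S1" for Z using that by (auto simp: S1_def)
  have c2: "card Z = 1" if "Z \<in> S2" for Z using that by (auto simp: S2_def)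
  have c3: "card Z = 2" if "Z \<in> S3" for Z using that FRm by (fastforce simp: S3_def)
  have d12: "S1 \<inter> S2 = {}"
  proof -
    have "{(i,i)} \<noteq> {(int m+1, j)}" if "i \<in> insert (int m+1) (FR m Y)" "j \<in> FD m Y" for i j
      using that FDm[of j] by auto
    then show ?thesis unfolding S1_def S2_def by blast
  qed
  have e: "Ext m Y = {{}} \<union> S1 \<union> S2 \<union> S3" using Ext_eq[OF Y] by (simp add: S1_def S2_def S3_def)
  have fin: "finite S1" "finite S2" "finite S3" using fFR fFD by (simp_all add: S1_def S2_def S3_def)
  have "(\<Sum>Z\<in>Ext m Y. g Z) = g {} + sum g S1 + sum g S2 + sum g S3"
  proof -
    have dA: "({{}} \<union> S1 \<union> S2) \<inter> S3 = {}" using c1 c2 c3 by fastforce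
    have dB: "({{}} \<union> S1) \<inter> S2 = {}" using c1 c2 d12 by fastforce
    have dC: "{{}} \<inter> S1 = {}" using c1 by fastforce
    have "sum g ({{}} \<union> S1 \<union> S2 \<union> S3) = sum g ({{}} \<union> S1 \<union> S2) + sum g S3"
      by (rule sum.union_disjoint) (use fin dA in auto)
    also have "sum g ({{}} \<union> S1 \<union> S2) = sum g ({{}} \<union> S1) + sum g S2"
      by (rule sum.union_disjoint) (use fin dB in auto)
    also have "sum g ({{}} \<union> S1) = sum g {{}} + sum g S1"
      by (rule sum.union_disjoint) (use fin dC in auto)
    finally show ?thesis using e by simp
  qed
  moreover have "sum g S1 = (\<Sum>i\<in>insert (int m+1) (FR m Y). g {(i,i)})"
    unfolding S1_def by (subst sum.reindex) (auto simp: inj_on_def)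
  moreover have "sum g S2 = (\<Sum>j\<in>FD m Y. g {(int m+1, j)})"
    unfolding S2_def by (subst sum.reindex) (auto simp: inj_on_def)
  moreover have "sum g S3 = (\<Sum>p\<in>FR m Y \<times> FD m Y. g {(fst p, fst p), (int m+1, snd p)})"
  proof -
    have inj: "inj_on (\<lambda>(i,j). {(i,i), (int m+1,j)}) (FR m Y \<times> FD m Y)"
    proof (rule inj_onI, clarify)
      fix i j i' j'
      assume a: "i \<in> FR m Y" "j \<in> FD m Y" "i' \<in> FR m Y" "j' \<in> FD m Y"
        and eq: "{(i,i), (int m+1,j)} = {(i',i'), (int m+1,j')}"
      have "i \<le> int m" "i' \<le> int m" using a FRm by auto
      then show "i = i' \<and> j = j'" using eq by (auto simp: doubleton_eq_iff)
    qed
    show ?thesis unfolding S3_def by (subst sum.reindex[OF inj]) (simp add: split_beta)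
  qed
  ultimately show ?thesis by simp
qed

lemma card_FR:
  assumes Y: "avalid m Y"
  shows "card (FR m Y) = m - card Y"
proof -
  have sub: "fst ` Y \<subseteq> {1..int m}" using Y by (auto simp: avalid_def)
  have "FR m Y = {1..int m} - fst ` Y" by (auto simp: FR_def)
  moreover have "inj_on fst Y" using avalid_pair[OF Y] by (auto simp: inj_on_def)
  then have "card (fst ` Y) = card Y" by (rule card_image)
  ultimately show ?thesis using sub by (simp add: card_Diff_subset finite_subset)
qed

lemma card_FD:
  assumes Y: "avalid m Y"
  shows "card (FD m Y) = m - dn Y"
proof -
  define D where "D = {c\<in>Y. snd c < fst c}"
  define h where "h c = int m + 1 - (fst c - snd c)" for c :: "int \<times> int"
  have Ysub: "Y \<subseteq> {1..int m} \<times> {1..int m}" using Y by (simp add: avalid_def)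
  have sub: "h ` D \<subseteq> {1..int m}" using Ysub by (auto simp: D_def h_def)
  have "FD m Y = {1..int m} - h ` D"
  proof (intro equalityI subsetI)
    fix j assume "j \<in> FD m Y" then show "j \<in> {1..int m} - h ` D"
      by (auto simp: FD_def D_def h_def)
  next
    fix j assume j: "j \<in> {1..int m} - h ` D"
    have "\<forall>c\<in>Y. fst c - snd c \<noteq> int m + 1 - j"
    proof
      fix c assume c: "c \<in> Y"
      show "fst c - snd c \<noteq> int m + 1 - j"
      proof (cases "snd c < fst c")
        case True
        then have cD: "c \<in> D" using c by (simp add: D_def)
        show ?thesis
        proof
          assume "fst c - snd c = int m + 1 - j"
          then have "h c = j" by (simp add: h_def)
          then show False using j cD by blast
        qed
      next
        case False then show ?thesis using j by auto
      qed
    qed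
    then show "j \<in> FD m Y" using j by (simp add: FD_def)
  qed
  moreover have "inj_on h D"
  proof (rule inj_onI)
    fix x y assume "x \<in> D" "y \<in> D" "h x = h y"
    then show "x = y" using avalid_pair[OF Y, of x y] by (auto simp: D_def h_def)
  qed
  then have "card (h ` D) = card D" by (rule card_image)
  ultimately show ?thesis using sub by (simp add: card_Diff_subset finite_subset dn_def D_def)
qed

definition NN :: "nat \<Rightarrow> nat \<Rightarrow> int \<Rightarrow> int" where
  "NN m k d = (\<Sum>Y\<in>VS m. if card Y = k \<and> int (dn Y) = d then 1 else 0)"

lemma union_stats:
  assumes Y: "avalid m Y" and Z: "Z \<in> Ext m Y"
  shows "card (phi ` Y \<union> Z) = card Y + card Z" "dn (phi ` Y \<union> Z) = dn Y + dn Z"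
proof -
  have ZN: "Z \<subseteq> New m" and aU: "avalid (Suc m) (phi ` Y \<union> Z)" using Z by (auto simp: Ext_def)
  have fin: "finite (phi ` Y \<union> Z)" using avalid_finite[OF aU] .
  then have fY: "finite (phi ` Y)" and fZ: "finite Z" by auto
  have dj: "phi ` Y \<inter> Z = {}" using phi_New[OF Y] ZN by blast
  show "card (phi ` Y \<union> Z) = card Y + card Z"
    using card_Un_disjoint[OF fY fZ dj] card_phi by simp
  have "{c \<in> phi ` Y \<union> Z. snd c < fst c} = {c \<in> phi ` Y. snd c < fst c} \<union> {c \<in> Z. snd c < fst c}" by blast
  moreover have "card ({c \<in> phi ` Y. snd c < fst c} \<union> {c \<in> Z. snd c < fst c}) =
      card {c \<in> phi ` Y. snd c < fst c} + card {c \<in> Z. snd c < fst c}"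
    by (rule card_Un_disjoint) (use fY fZ dj in auto)
  ultimately show "dn (phi ` Y \<union> Z) = dn Y + dn Z"
    using dn_phi[of Y] by (simp add: dn_def)
qed

lemma dn_diag1: "dn {(i,i)} = 0"
proof -
  have "{c \<in> {(i,i)}. snd c < fst c} = {}" by auto
  then show ?thesis by (simp add: dn_def)
qed

lemma dn_row1: "j < i \<Longrightarrow> dn {(i,j)} = 1"
proof -
  assume "j < i"
  then have "{c \<in> {(i,j)}. snd c < fst c} = {(i,j)}" by auto
  then show ?thesis by (simp add: dn_def)
qed

definition ind :: "bool \<Rightarrow> int" where "ind P = (if P then 1 else 0)"

lemma inner:
  assumes Y: "avalid m Y"
  shows "(\<Sum>Z\<in>Ext m Y. ind (card (phi ` Y \<union> Z) = k \<and> int (dn (phi ` Y \<union> Z)) = d))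
    = ind (card Y = k \<and> int (dn Y) = d)
      + (int m - int (card Y) + 1) * ind (card Y + 1 = k \<and> int (dn Y) = d)
      + (int m - int (dn Y)) * ind (card Y + 1 = k \<and> int (dn Y) + 1 = d)
      + (int m - int (card Y)) * (int m - int (dn Y)) * ind (card Y + 2 = k \<and> int (dn Y) + 1 = d)"
proof -
  define g where "g Z = ind (card Y + card Z = k \<and> int (dn Y + dn Z) = d)" for Z
  have "(\<Sum>Z\<in>Ext m Y. ind (card (phi ` Y \<union> Z) = k \<and> int (dn (phi ` Y \<union> Z)) = d)) = (\<Sum>Z\<in>Ext m Y. g Z)"
    by (rule sum.cong) (simp_all add: union_stats[OF Y] g_def)
  also have "\<dots> = g {} + (\<Sum>i\<in>insert (int m+1) (FR m Y). g {(i,i)})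
     + (\<Sum>j\<in>FD m Y. g {(int m+1, j)}) + (\<Sum>p\<in>FR m Y \<times> FD m Y. g {(fst p, fst p), (int m+1, snd p)})"
    by (rule sum_Ext[OF Y])
  also have "g {} = ind (card Y = k \<and> int (dn Y) = d)" by (simp add: g_def dn_def)
  also have "(\<Sum>i\<in>insert (int m+1) (FR m Y). g {(i,i)}) = (int m - int (card Y) + 1) * ind (card Y + 1 = k \<and> int (dn Y) = d)"
  proof -
    have "g {(i,i)} = ind (card Y + 1 = k \<and> int (dn Y) = d)" for i by (simp add: g_def dn_diag1)
    moreover have "card (insert (int m+1) (FR m Y)) = m - card Y + 1"
    proof -
      have "finite (FR m Y)" unfolding FR_def by (rule finite_subset[of _ "{1..int m}"]) auto
      moreover have "int m + 1 \<notin> FR m Y" by (simp add: FR_def)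
      ultimately show ?thesis using card_FR[OF Y] by simp
    qed
    moreover have "card Y \<le> m"
    proof -
      have "card (FR m Y) = m - card Y" by (rule card_FR[OF Y])
      have "inj_on fst Y" using avalid_pair[OF Y] by (auto simp: inj_on_def)
      then have "card Y = card (fst ` Y)" by (simp add: card_image)
      also have "\<dots> \<le> card {1..int m}" by (rule card_mono) (use Y in \<open>auto simp: avalid_def\<close>)
      finally show ?thesis by simp
    qed
    ultimately show ?thesis by (simp add: of_nat_diff)
  qed
  also have "(\<Sum>j\<in>FD m Y. g {(int m+1, j)}) = (int m - int (dn Y)) * ind (card Y + 1 = k \<and> int (dn Y) + 1 = d)"
  proof -
    have "g {(int m+1, j)} = ind (card Y + 1 = k \<and> int (dn Y) + 1 = d)" if "j \<in> FD m Y" for j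
    proof -
      have "j < int m + 1" using that by (simp add: FD_def)
      then show ?thesis by (simp add: g_def dn_row1 add.commute)
    qed
    then have "(\<Sum>j\<in>FD m Y. g {(int m+1, j)}) = of_nat (card (FD m Y)) * ind (card Y + 1 = k \<and> int (dn Y) + 1 = d)"
      by simp
    moreover have "dn Y \<le> m"
    proof -
      have "dn Y \<le> card Y" unfolding dn_def by (rule card_mono) (use avalid_finite[OF Y] in auto)
      also have "card Y \<le> m"
      proof -
        have "inj_on fst Y" using avalid_pair[OF Y] by (auto simp: inj_on_def)
        then have "card Y = card (fst ` Y)" by (simp add: card_image)
        also have "\<dots> \<le> card {1..int m}" by (rule card_mono) (use Y in \<open>auto simp: avalid_def\<close>)
        finally show ?thesis by simp
      qed
      finally show ?thesis .
    qed
    ultimately show ?thesis using card_FD[OF Y] by (simp add: of_nat_diff)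
  qed
  also have "(\<Sum>p\<in>FR m Y \<times> FD m Y. g {(fst p, fst p), (int m+1, snd p)})
      = (int m - int (card Y)) * (int m - int (dn Y)) * ind (card Y + 2 = k \<and> int (dn Y) + 1 = d)"
  proof -
    have "g {(fst p, fst p), (int m+1, snd p)} = ind (card Y + 2 = k \<and> int (dn Y) + 1 = d)"
      if "p \<in> FR m Y \<times> FD m Y" for p
    proof -
      have a: "fst p \<le> int m" "snd p \<le> int m" using that by (auto simp: FR_def FD_def)
      then have c: "card {(fst p, fst p), (int m+1, snd p)} = 2" by simp
      have "{c \<in> {(fst p, fst p), (int m+1, snd p)}. snd c < fst c} = {(int m+1, snd p)}" using a by auto
      then have "dn {(fst p, fst p), (int m+1, snd p)} = 1" by (simp add: dn_def)
      then show ?thesis using c by (simp add: g_def add.commute)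
    qed
    then have "(\<Sum>p\<in>FR m Y \<times> FD m Y. g {(fst p, fst p), (int m+1, snd p)})
       = of_nat (card (FR m Y \<times> FD m Y)) * ind (card Y + 2 = k \<and> int (dn Y) + 1 = d)"
      by simp
    moreover have "card Y \<le> m" "dn Y \<le> m"
    proof -
      have "inj_on fst Y" using avalid_pair[OF Y] by (auto simp: inj_on_def)
      then have "card Y = card (fst ` Y)" by (simp add: card_image)
      also have "\<dots> \<le> card {1..int m}" by (rule card_mono) (use Y in \<open>auto simp: avalid_def\<close>)
      finally show cY: "card Y \<le> m" by simp
      have "dn Y \<le> card Y" unfolding dn_def by (rule card_mono) (use avalid_finite[OF Y] in auto)
      then show "dn Y \<le> m" using cY by simp
    qed
    ultimately show ?thesis using card_FD[OF Y] card_FR[OF Y] by (simp add: card_cartesian_product of_nat_diff)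
  qed
  finally show ?thesis .
qed

lemma NN_ind: "NN m k d = (\<Sum>Y\<in>VS m. ind (card Y = k \<and> int (dn Y) = d))"
  by (simp add: NN_def ind_def)

lemma NN_Suc:
  "NN (Suc m) k d = NN m k d
    + (if k \<ge> 1 then (int m + 2 - int k) * NN m (k-1) d + (int m + 1 - d) * NN m (k-1) (d-1) else 0)
    + (if k \<ge> 2 then (int m + 2 - int k) * (int m + 1 - d) * NN m (k-2) (d-1) else 0)"
proof -
  define T1 where "T1 Y = ind (card Y = k \<and> int (dn Y) = d)" for Y
  define T2 where "T2 Y = (int m - int (card Y) + 1) * ind (card Y + 1 = k \<and> int (dn Y) = d)" for Y
  define T3 where "T3 Y = (int m - int (dn Y)) * ind (card Y + 1 = k \<and> int (dn Y) + 1 = d)" for Y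
  define T4 where "T4 Y = (int m - int (card Y)) * (int m - int (dn Y)) * ind (card Y + 2 = k \<and> int (dn Y) + 1 = d)" for Y
  have "NN (Suc m) k d = (\<Sum>Y\<in>VS m. \<Sum>Z\<in>Ext m Y. ind (card (phi ` Y \<union> Z) = k \<and> int (dn (phi ` Y \<union> Z)) = d))"
    unfolding NN_ind by (rule sum_decomp)
  also have "\<dots> = (\<Sum>Y\<in>VS m. T1 Y + T2 Y + T3 Y + T4 Y)"
    by (rule sum.cong) (simp_all add: inner VS_def T1_def T2_def T3_def T4_def)
  also have "\<dots> = sum T1 (VS m) + sum T2 (VS m) + sum T3 (VS m) + sum T4 (VS m)"
    by (simp add: sum.distrib)
  finally have A: "NN (Suc m) k d = sum T1 (VS m) + sum T2 (VS m) + sum T3 (VS m) + sum T4 (VS m)" .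
  have B1: "sum T1 (VS m) = NN m k d" by (simp add: NN_ind T1_def)
  have B23: "sum T2 (VS m) + sum T3 (VS m) = (if k \<ge> 1 then (int m + 2 - int k) * NN m (k-1) d + (int m + 1 - d) * NN m (k-1) (d-1) else 0)"
  proof (cases "k \<ge> 1")
    case True
    have "sum T2 (VS m) = (\<Sum>Y\<in>VS m. (int m + 2 - int k) * ind (card Y = k - 1 \<and> int (dn Y) = d))"
      by (rule sum.cong) (use True in \<open>auto simp: T2_def ind_def\<close>)
    moreover have "sum T3 (VS m) = (\<Sum>Y\<in>VS m. (int m + 1 - d) * ind (card Y = k - 1 \<and> int (dn Y) = d - 1))"
      by (rule sum.cong) (use True in \<open>auto simp: T3_def ind_def\<close>)
    ultimately show ?thesis using True by (simp add: NN_ind sum_distrib_left)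
  next
    case False
    then show ?thesis by (simp add: T2_def T3_def ind_def)
  qed
  have B4: "sum T4 (VS m) = (if k \<ge> 2 then (int m + 2 - int k) * (int m + 1 - d) * NN m (k-2) (d-1) else 0)"
  proof (cases "k \<ge> 2")
    case True
    have "sum T4 (VS m) = (\<Sum>Y\<in>VS m. ((int m + 2 - int k) * (int m + 1 - d)) * ind (card Y = k - 2 \<and> int (dn Y) = d - 1))"
      by (rule sum.cong) (use True in \<open>auto simp: T4_def ind_def\<close>)
    then show ?thesis using True by (simp add: NN_ind sum_distrib_left)
  next
    case False
    then show ?thesis by (simp add: T4_def ind_def)
  qed
  show ?thesis using A B1 B23 B4 by linarith
qed

lemma VS_0: "VS 0 = {{}}"
  by (auto simp: VS_def avalid_def)

lemma NN_0: "NN 0 k d = (if k = 0 \<and> d = 0 then 1 else 0)"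
  by (simp add: NN_def VS_0 dn_def)

lemma Phi_0m: "Phi 0 k d = (if k = 0 \<and> d = 0 then 1 else 0)"
  by (simp add: Phi_def G_def)

lemma Phi_k0: "Phi m 0 d = (if d = 0 then 1 else 0)"
proof -
  have "Phi m 0 d = (\<Sum>j\<le>m. G m m j * EE 1 j d)" by (simp add: Phi_def)
  also have "\<dots> = (\<Sum>j\<in>{0}. G m m j * EE 1 j d)"
    by (rule sum.mono_neutral_right) auto
  also have "\<dots> = (if d = 0 then 1 else 0)" by (simp add: G_def)
  finally show ?thesis .
qed

lemma NN_Phi: "NN m k d = Phi m k d"
proof (induction m arbitrary: k d)
  case 0
  then show ?case by (simp add: NN_0 Phi_0m)
next
  case (Suc m)
  show ?case
  proof (cases "k = 0")
    case True
    then show ?thesis using NN_Suc[of m 0 d] Suc by (simp add: Phi_k0)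
  next
    case False
    then have k1: "k \<ge> 1" by simp
    show ?thesis using NN_Suc[of m k d] Phi_rec[OF k1, of m d] Suc k1 by simp
  qed
qed

lemma EE_supp: "EE n j d \<noteq> 0 \<Longrightarrow> -1 \<le> d \<and> d \<le> int n - 1 \<and> (n \<ge> 1 \<longrightarrow> d \<ge> 0)"
proof (induction n j d rule: EE.induct)
  case (1 i d) then show ?case by (auto split: if_splits)
next
  case (2 i d) then show ?case by (auto split: if_splits)
next
  case (3 n i d)
  have "EE (Suc n) i d \<noteq> 0 \<or> EE (Suc n) i (d-1) \<noteq> 0 \<or> (i \<noteq> 0 \<and> EE n (i-1) (d-1) \<noteq> 0)"
    using 3(4) by (auto split: if_splits)
  then show ?case
  proof (elim disjE conjE)
    assume A: "EE (Suc n) i d \<noteq> 0"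
    have "- 1 \<le> d \<and> d \<le> int (Suc n) - 1 \<and> (Suc n \<ge> 1 \<longrightarrow> d \<ge> 0)" by (rule 3(1)[OF A])
    then show ?thesis by simp
  next
    assume B: "EE (Suc n) i (d-1) \<noteq> 0"
    have "- 1 \<le> d - 1 \<and> d - 1 \<le> int (Suc n) - 1 \<and> (Suc n \<ge> 1 \<longrightarrow> d - 1 \<ge> 0)" by (rule 3(2)[OF B])
    then show ?thesis by simp
  next
    assume C1: "i \<noteq> 0" and C2: "EE n (i-1) (d-1) \<noteq> 0"
    have "- 1 \<le> d - 1 \<and> d - 1 \<le> int n - 1 \<and> (n \<ge> 1 \<longrightarrow> d - 1 \<ge> 0)" using 3(3) C1 C2 by simp
    then show ?thesis by simp
  qed
qed

definition esum :: "nat \<Rightarrow> nat \<Rightarrow> int" where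
  "esum n j = (\<Sum>d\<in>{-1..int n}. EE n j d)"

lemma esum_any:
  assumes "finite S" "{-1..int n} \<subseteq> S"
  shows "(\<Sum>d\<in>S. EE n j d) = esum n j"
proof -
  have z: "EE n j x = 0" if xn: "x \<notin> {-1..int n}" for x
  proof (rule ccontr)
    assume "EE n j x \<noteq> 0"
    then have "-1 \<le> x \<and> x \<le> int n - 1" using EE_supp by blast
    with xn show False by auto
  qed
  show ?thesis unfolding esum_def
    by (rule sum.mono_neutral_right) (use assms z in \<open>auto\<close>)
qed

lemma esum_any_shift:
  assumes "finite S" "\<And>d. d \<in> {-1..int n} \<Longrightarrow> d + 1 \<in> S"
  shows "(\<Sum>d\<in>S. EE n j (d - 1)) = esum n j"
proof -
  have inj: "inj_on (\<lambda>d. d - 1) S" by (auto simp: inj_on_def)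
  have "(\<Sum>d\<in>S. EE n j (d - 1)) = (\<Sum>d\<in>(\<lambda>d. d - 1) ` S. EE n j d)"
    by (simp add: sum.reindex[OF inj])
  also have "\<dots> = esum n j"
  proof (rule esum_any)
    show "finite ((\<lambda>d. d - 1) ` S)" using assms by simp
    show "{-1..int n} \<subseteq> (\<lambda>d. d - 1) ` S"
    proof
      fix x assume "x \<in> {-1..int n}"
      then have "x + 1 \<in> S" using assms by blast
      then show "x \<in> (\<lambda>d. d - 1) ` S" by (rule rev_image_eqI) simp
    qed
  qed
  finally show ?thesis .
qed

lemma esum_rec: "esum (Suc (Suc n)) j = 2 * esum (Suc n) j + (if j = 0 then 0 else esum n (j - 1))"
proof -
  define S where "S = {-1..int (Suc (Suc n))}"
  have fS: "finite S" by (simp add: S_def)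
  have "esum (Suc (Suc n)) j = (\<Sum>d\<in>S. EE (Suc n) j d) + (\<Sum>d\<in>S. EE (Suc n) j (d - 1))
        + (\<Sum>d\<in>S. if j = 0 then 0 else EE n (j-1) (d-1))"
    by (simp add: esum_def S_def sum.distrib)
  also have "(\<Sum>d\<in>S. EE (Suc n) j d) = esum (Suc n) j"
    by (rule esum_any) (auto simp: S_def)
  also have "(\<Sum>d\<in>S. EE (Suc n) j (d - 1)) = esum (Suc n) j"
    by (rule esum_any_shift) (auto simp: S_def)
  also have "(\<Sum>d\<in>S. if j = 0 then 0 else EE n (j-1) (d-1)) = (if j = 0 then 0 else esum n (j - 1))"
  proof (cases "j = 0")
    case True then show ?thesis by simp
  next
    case False
    have "(\<Sum>d\<in>S. EE n (j-1) (d-1)) = esum n (j-1)"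
      by (rule esum_any_shift) (auto simp: S_def)
    then show ?thesis using False by simp
  qed
  finally show ?thesis by simp
qed

definition aa :: "nat \<Rightarrow> nat \<Rightarrow> nat" where
  "aa k j = (if j = 0 then 0 else (k - j) choose (j - 1)) + ((k + 1 - j) choose j)"

lemma esum_1: "esum (Suc 0) j = (if j = 0 then 1 else 0)"
proof -
  have "{-1..int (Suc 0)} = {-1, 0, 1::int}" by auto
  then show ?thesis by (simp add: esum_def)
qed

lemma esum_0: "esum 0 j = (if j = 0 then 1 else 0)"
proof -
  have "{-1..int 0} = {-1, 0::int}" by auto
  then show ?thesis by (simp add: esum_def)
qed

lemma aa_rec:
  assumes "1 \<le> n" "1 \<le> j" "2 * j \<le> n + 1"
  shows "aa (n+1) j = aa n j + aa (n-1) (j-1)"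
proof -
  obtain j' where j: "j = Suc j'" using assms by (cases j) auto
  define r where "r = n - j"
  have n: "n = r + j" using assms r_def by simp
  have e1: "aa (n+1) j = (Suc r choose j') + (Suc (Suc r) choose Suc j')"
    by (simp add: aa_def n j)
  have e2: "aa n j = (r choose j') + (Suc r choose Suc j')"
    by (simp add: aa_def n j)
  have e3: "aa (n-1) (j-1) = (if j' = 0 then 0 else r choose (j' - 1)) + (Suc r choose j')"
    using assms by (simp add: aa_def n j)
  show ?thesis
  proof (cases j')
    case 0 then show ?thesis using e1 e2 e3 by simp
  next
    case (Suc j'')
    then show ?thesis using e1 e2 e3 by simp
  qed
qed

lemma esum_closed:
  "n \<ge> 1 \<Longrightarrow> 2 * esum n j = (if 2 * j \<le> n then 2 ^ (n - 2 * j) * int (aa (n - 1) j) else 0)"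
proof (induction n arbitrary: j rule: less_induct)
  case (less n)
  show ?case
  proof (cases "n \<le> 2")
    case True
    then consider "n = 1" | "n = 2" using less.prems by linarith
    then show ?thesis
    proof cases
      case 1 then show ?thesis by (cases j) (simp_all add: esum_1 aa_def)
    next
      case 2
      have "esum 2 j = 2 * esum (Suc 0) j + (if j = 0 then 0 else esum 0 (j - 1))"
        using esum_rec[of 0 j] by (simp add: numeral_2_eq_2)
      then show ?thesis using 2 by (cases j) (auto simp: esum_1 esum_0 aa_def numeral_2_eq_2)
    qed
  next
    case False
    define n0 where "n0 = n - 2"
    have n0: "n = Suc (Suc n0)" "n0 \<ge> 1" using False by (auto simp: n0_def)
    have IH1: "2 * esum (Suc n0) i = (if 2 * i \<le> Suc n0 then 2 ^ (Suc n0 - 2 * i) * int (aa n0 i) else 0)" for i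
      using less.IH[of "Suc n0" i] n0 by simp
    have IH2: "2 * esum n0 i = (if 2 * i \<le> n0 then 2 ^ (n0 - 2 * i) * int (aa (n0 - 1) i) else 0)" for i
      using less.IH[of n0 i] n0 by simp
    have rec: "2 * esum n j = 2 * (2 * esum (Suc n0) j) + (if j = 0 then 0 else 2 * esum n0 (j - 1))"
      using esum_rec[of n0 j] n0 by simp
    show ?thesis
    proof (cases "j = 0")
      case True
      then show ?thesis using rec IH1[of 0] n0 by (simp add: aa_def)
    next
      case jne: False
      consider (a) "2 * j \<le> Suc n0" | (b) "2 * j = Suc (Suc n0)" | (c) "2 * j > Suc (Suc n0)" by linarith
      then show ?thesis
      proof cases
        case a
        have ar: "aa (Suc n0) j = aa n0 j + aa (n0 - 1) (j - 1)"
          using aa_rec[of n0 j] a n0 jne by simp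
        have sd: "n - 2 * j = Suc (Suc n0 - 2 * j)" using a n0 by simp
        have p1: "(2::int) * 2 ^ (Suc n0 - 2 * j) = 2 ^ (n - 2 * j)"
          unfolding sd by simp
        have p2: "n0 - 2 * (j - 1) = n - 2 * j" using a n0 jne by simp
        have c2: "2 * (j - 1) \<le> n0" using a jne by simp
        have I1: "2 * esum (Suc n0) j = 2 ^ (Suc n0 - 2 * j) * int (aa n0 j)" using IH1[of j] a by simp
        have I2: "2 * esum n0 (j - 1) = 2 ^ (n - 2 * j) * int (aa (n0 - 1) (j - 1))"
          using IH2[of "j-1"] c2 p2 by simp
        have "2 * esum n j = 2 * (2 ^ (Suc n0 - 2 * j) * int (aa n0 j)) + 2 ^ (n - 2 * j) * int (aa (n0 - 1) (j - 1))"
          using rec I1 I2 jne by simp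
        also have "\<dots> = 2 ^ (n - 2 * j) * int (aa (Suc n0) j)"
          using p1[symmetric] ar by (simp add: algebra_simps)
        finally show ?thesis using a n0 by simp
      next
        case b
        then obtain t where t: "j = Suc t" "n0 = 2 * t" using jne by (cases j) auto
        have t1: "t \<ge> 1" using t n0 by simp
        have ar: "aa (Suc n0) j = 2" "aa (n0 - 1) (j - 1) = 2"
          using t t1 by (auto simp: aa_def)
        show ?thesis using rec IH1[of j] IH2[of "j-1"] b n0 t ar by simp
      next
        case c
        have c1: "\<not> 2 * (j - 1) \<le> n0" "\<not> 2 * j \<le> Suc n0" "\<not> 2 * j \<le> n" using c n0 by auto
        have "2 * esum (Suc n0) j = 0" using IH1[of j] c1 by simp
        moreover have "2 * esum n0 (j - 1) = 0" using IH2[of "j-1"] c1 by simp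
        ultimately show ?thesis using rec c1 by simp
      qed
    qed
  qed
qed

lemma anassa_NN: "int (anassa_count m k) = (\<Sum>d\<in>{0..int k}. NN m k d)"
proof -
  have "anassa_count m k = card {A \<in> VS m. card A = k}"
    by (simp add: anassa_count_avalid VS_def)
  then have "int (anassa_count m k) = (\<Sum>Y\<in>VS m. ind (card Y = k))"
    by (simp add: ind_def sum.If_cases finite_VS Int_def)
  also have "\<dots> = (\<Sum>Y\<in>VS m. \<Sum>d\<in>{0..int k}. ind (card Y = k \<and> int (dn Y) = d))"
  proof (rule sum.cong[OF refl])
    fix Y assume Y: "Y \<in> VS m"
    have "dn Y \<le> card Y" unfolding dn_def
      by (rule card_mono) (use avalid_finite Y in \<open>auto simp: VS_def\<close>)
    then have "(\<Sum>d\<in>{0..int k}. ind (card Y = k \<and> int (dn Y) = d)) = ind (card Y = k)"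
      by (cases "card Y = k") (auto simp: ind_def)
    then show "ind (card Y = k) = (\<Sum>d\<in>{0..int k}. ind (card Y = k \<and> int (dn Y) = d))" by simp
  qed
  also have "\<dots> = (\<Sum>d\<in>{0..int k}. NN m k d)"
    by (subst sum.swap) (simp add: NN_ind)
  finally show ?thesis .
qed

lemma sum_EE_k: "(\<Sum>d\<in>{0..int k}. EE (k+1) j d) = esum (k+1) j"
proof -
  have "(\<Sum>d\<in>{-1..int (k+1)}. EE (k+1) j d) = (\<Sum>d\<in>{0..int k}. EE (k+1) j d)"
  proof (rule sum.mono_neutral_right)
    show "finite {-1..int (k+1)}" by simp
    show "{0..int k} \<subseteq> {-1..int (k+1)}" by auto
    show "\<forall>i\<in>{-1..int (k+1)} - {0..int k}. EE (k+1) j i = 0"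
    proof
      fix i assume i: "i \<in> {-1..int (k+1)} - {0..int k}"
      show "EE (k+1) j i = 0"
      proof (rule ccontr)
        assume "EE (k+1) j i \<noteq> 0"
        then have "0 \<le> i \<and> i \<le> int k" using EE_supp[of "k+1" j i] by auto
        then show False using i by auto
      qed
    qed
  qed
  then show ?thesis by (simp add: esum_def)
qed

lemma sum_Phi:
  assumes "k \<le> m"
  shows "(\<Sum>d\<in>{0..int k}. Phi m k d) = (\<Sum>j\<le>m. G m (m-k) j * esum (k+1) j)"
proof -
  have "(\<Sum>d\<in>{0..int k}. Phi m k d) = (\<Sum>d\<in>{0..int k}. \<Sum>j\<le>m. G m (m-k) j * EE (k+1) j d)"
    using assms by (simp add: Phi_def)
  also have "\<dots> = (\<Sum>j\<le>m. \<Sum>d\<in>{0..int k}. G m (m-k) j * EE (k+1) j d)"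
    by (rule sum.swap)
  also have "\<dots> = (\<Sum>j\<le>m. G m (m-k) j * esum (k+1) j)"
  proof -
    have h: "sum (EE (Suc k) j) {0..int k} = esum (Suc k) j" for j using sum_EE_k[of k j] by simp
    show ?thesis by (simp add: sum_distrib_left[symmetric] h)
  qed
  finally show ?thesis .
qed

lemma ff_poch: "falling_fact (int (p + j)) j = int (pochhammer (Suc p) j)"
proof (induction j)
  case 0 then show ?case by (simp add: falling_fact_def)
next
  case (Suc j)
  have "falling_fact (int (p + Suc j)) (Suc j) = (\<Prod>i<Suc j. int (p + Suc j) - int i)"
    by (simp add: falling_fact_def)
  also have "\<dots> = (int (p + Suc j) - int 0) * (\<Prod>i<j. int (p + Suc j) - int (Suc i))"
    by (rule prod.lessThan_Suc_shift)
  also have "(\<Prod>i<j. int (p + Suc j) - int (Suc i)) = falling_fact (int (p + j)) j"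
    by (simp add: falling_fact_def)
  finally show ?case using Suc by (simp add: pochhammer_Suc algebra_simps)
qed

lemma ff_fact: "falling_fact (int n) r = fact r * int (n choose r)"
proof -
  have "real_of_int (falling_fact (int n) r) = (\<Prod>i = 0..<r. real n - of_nat i)"
    by (simp add: falling_fact_def atLeast0LessThan)
  also have "\<dots> = fact r * (real n gchoose r)" by (rule gbinomial_mult_fact[symmetric])
  also have "\<dots> = fact r * real (n choose r)" by (simp add: binomial_gbinomial)
  finally have "real_of_int (falling_fact (int n) r) = real_of_int (fact r * int (n choose r))" by simp
  then show ?thesis by (simp only: of_int_eq_iff)
qed

lemma binom_ext_nat: "binom_ext (int n) (int r) = int (n choose r)"
  by (simp add: binom_ext_def ff_fact)

lemma binom_ext_neg1: "binom_ext (int n) (-1) = 0"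
  by (simp add: binom_ext_def)

lemma bracket:
  assumes "2 * j \<le> k + 1"
  shows "binom_ext (int k - int j) (int j - 1) + binom_ext (int k - int j + 1) (int j) = int (aa k j)"
proof (cases j)
  case 0
  have "binom_ext (int k + 1) 0 = 1" by (simp add: binom_ext_def falling_fact_def)
  then show ?thesis using 0 binom_ext_neg1[of k] by (simp add: aa_def)
next
  case (Suc j')
  have jk: "Suc j' \<le> k" using assms Suc by simp
  have e1: "int k - int j = int (k - j)" "int j - 1 = int (j - 1)" using Suc jk by auto
  have e2: "int k - int j + 1 = int (k + 1 - j)" using Suc jk by auto
  have b1: "binom_ext (int k - int j + 1) (int j) = int ((k + 1 - j) choose j)"
    by (simp only: e2 binom_ext_nat)
  have b2: "binom_ext (int k - int j) (int j - 1) = int ((k - j) choose (j - 1))"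
    by (simp only: e1 binom_ext_nat)
  show ?thesis unfolding b1 b2 using Suc by (simp add: aa_def)
qed

lemma powi_eq:
  assumes "2 * j \<le> k + 1"
  shows "(2::real) powi (int k - 2 * int j) = 2 ^ (k + 1 - 2 * j) / 2"
proof -
  have e: "int k - 2 * int j = int (k + 1 - 2 * j) - 1" using assms by simp
  have "(2::real) powi (int k - 2 * int j) = 2 powi (int (k + 1 - 2 * j) - 1)" by (simp only: e)
  also have "\<dots> = 2 powi (int (k + 1 - 2 * j)) / 2 powi 1" by (rule power_int_diff) simp
  also have "\<dots> = 2 ^ (k + 1 - 2 * j) / 2" by (simp only: power_int_of_nat power_int_1_right)
  finally show ?thesis .
qed

lemma S2e_nat: "Stirling2_ext (int m) (int r) = int (Stirling m r)"
  by (simp add: Stirling2_ext_def)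

lemma ceil_facts:
  fixes k :: nat
  shows "2 * nat \<lceil>real k / 2\<rceil> \<le> k + 1" "k \<le> 2 * nat \<lceil>real k / 2\<rceil>"
proof -
  define c where "c = \<lceil>real k / 2\<rceil>"
  have cc: "of_int c - 1 < real k / 2" "real k / 2 \<le> of_int c" using ceiling_correct[of "real k / 2"] by (auto simp: c_def)
  have c0: "0 \<le> c" unfolding c_def by simp
  have "real_of_int (2 * c - 2) < real_of_int (int k)" using cc by simp
  then have i1: "2 * c - 2 < int k" by (simp only: of_int_less_iff)
  have "real_of_int (int k) \<le> real_of_int (2 * c)" using cc by simp
  then have i2: "int k \<le> 2 * c" by (simp only: of_int_le_iff)
  show "2 * nat \<lceil>real k / 2\<rceil> \<le> k + 1" using i1 c0 unfolding c_def[symmetric] by linarith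
  show "k \<le> 2 * nat \<lceil>real k / 2\<rceil>" using i2 c0 unfolding c_def[symmetric] by linarith
qed

lemma esum_real:
  assumes "2 * j \<le> k + 1"
  shows "real_of_int (esum (k+1) j) = 2 ^ (k + 1 - 2 * j) / 2 * real (aa k j)"
proof -
  have "2 * esum (k+1) j = 2 ^ (k + 1 - 2 * j) * int (aa k j)"
    using esum_closed[of "k+1" j] assms by simp
  then have "real_of_int (2 * esum (k+1) j) = real_of_int (2 ^ (k + 1 - 2 * j) * int (aa k j))" by simp
  then show ?thesis by simp
qed

lemma esum_zero:
  assumes "k + 1 < 2 * j"
  shows "esum (k+1) j = 0"
  using esum_closed[of "k+1" j] assms by simp

lemma term_eq:
  assumes km: "k \<le> m" and j: "2 * j \<le> k + 1"
  shows "real_of_int (falling_fact (int m - int k + int j) j * Stirling2_ext (int m) (int m - int k + int j))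
       * (2::real) powi (int k - 2 * int j)
       * real_of_int (binom_ext (int k - int j) (int j - 1) + binom_ext (int k - int j + 1) (int j))
     = real_of_int (G m (m - k) j) * real_of_int (esum (k+1) j)"
proof -
  have e: "int m - int k + int j = int (m - k + j)" using km by simp
  have jk: "j \<le> k + 1" using j by simp
  show ?thesis
    unfolding e ff_poch S2e_nat bracket[OF j] powi_eq[OF j] esum_real[OF j]
    by (simp add: G_def)
qed

lemma term_zero:
  assumes km: "m < k"
  shows "falling_fact (int m - int k + int j) j * Stirling2_ext (int m) (int m - int k + int j) = 0"
proof (cases "int m - int k + int j \<ge> 0")
  case True
  define x where "x = int m - int k + int j"
  have "nat x < j" using True km by (simp add: x_def)
  then have "nat x \<in> {..<j}" by simp
  moreover have "x - int (nat x) = 0" using True by (simp add: x_def)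
  ultimately have "\<exists>a\<in>{..<j}. x - int a = 0" by blast
  then have "falling_fact x j = 0" unfolding falling_fact_def
    by (intro prod_zero) auto
  then show ?thesis by (simp add: x_def)
next
  case False
  then have "Stirling2_ext (int m) (int m - int k + int j) = 0"
    by (cases "m = 0") (auto simp: Stirling2_ext_def)
  then show ?thesis by simp
qed

theorem theorem3p2:
  fixes m k :: nat
  shows "real (anassa_count m k) =
    (\<Sum>j = 0..nat \<lceil>real k / 2\<rceil>.
       real_of_int (falling_fact (int m - int k + int j) j
                    * Stirling2_ext (int m) (int m - int k + int j))
       * (2::real) powi (int k - 2 * int j)
       * real_of_int (binom_ext (int k - int j) (int j - 1) + binom_ext (int k - int j + 1) (int j)))"
proof (cases "k \<le> m")
  case km: True
  define J where "J = nat \<lceil>real k / 2\<rceil>"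
  have J1: "2 * J \<le> k + 1" and J2: "k \<le> 2 * J" using ceil_facts[of k] by (auto simp: J_def)
  define F where "F j = real_of_int (G m (m - k) j) * real_of_int (esum (k+1) j)" for j
  have "int (anassa_count m k) = (\<Sum>d\<in>{0..int k}. Phi m k d)" by (simp add: anassa_NN NN_Phi)
  also have "\<dots> = (\<Sum>j\<le>m. G m (m-k) j * esum (k+1) j)" by (rule sum_Phi[OF km])
  finally have L0: "int (anassa_count m k) = (\<Sum>j\<le>m. G m (m-k) j * esum (k+1) j)" .
  have L: "real (anassa_count m k) = (\<Sum>j\<le>m. F j)"
  proof -
    have "real (anassa_count m k) = real_of_int (int (anassa_count m k))" by simp
    also have "\<dots> = real_of_int (\<Sum>j\<le>m. G m (m-k) j * esum (k+1) j)" by (simp only: L0)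
    also have "\<dots> = (\<Sum>j\<le>m. real_of_int (G m (m-k) j * esum (k+1) j))" by (rule of_int_sum)
    also have "\<dots> = (\<Sum>j\<le>m. F j)" by (simp add: F_def)
    finally show ?thesis .
  qed
  have R: "(\<Sum>j = 0..J. real_of_int (falling_fact (int m - int k + int j) j
                    * Stirling2_ext (int m) (int m - int k + int j))
       * (2::real) powi (int k - 2 * int j)
       * real_of_int (binom_ext (int k - int j) (int j - 1) + binom_ext (int k - int j + 1) (int j)))
      = (\<Sum>j = 0..J. F j)"
  proof (rule sum.cong[OF refl])
    fix j assume "j \<in> {0..J}"
    then have "2 * j \<le> k + 1" using J1 by simp
    then show "real_of_int (falling_fact (int m - int k + int j) j
                    * Stirling2_ext (int m) (int m - int k + int j))
       * (2::real) powi (int k - 2 * int j)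
       * real_of_int (binom_ext (int k - int j) (int j - 1) + binom_ext (int k - int j + 1) (int j)) = F j"
      unfolding F_def by (rule term_eq[OF km])
  qed
  have A: "(\<Sum>j = 0..J. F j) = (\<Sum>j = 0..J + m. F j)"
  proof (rule sum.mono_neutral_left)
    show "\<forall>i\<in>{0..J + m} - {0..J}. F i = 0"
    proof
      fix i assume "i \<in> {0..J + m} - {0..J}"
      then have "k + 1 < 2 * i" using J2 by auto
      then show "F i = 0" using esum_zero[of k i] by (simp add: F_def)
    qed
  qed auto
  have B: "(\<Sum>j\<le>m. F j) = (\<Sum>j = 0..J + m. F j)"
  proof (rule sum.mono_neutral_left)
    show "\<forall>i\<in>{0..J + m} - {..m}. F i = 0"
    proof
      fix i assume "i \<in> {0..J + m} - {..m}"
      then have "m < m - k + i" by auto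
      then show "F i = 0" by (simp add: F_def G_vanish)
    qed
  qed auto
  show ?thesis unfolding J_def[symmetric] by (simp only: L R A B)
next
  case False
  then have km: "m < k" by simp
  have "int (anassa_count m k) = (\<Sum>d\<in>{0..int k}. Phi m k d)" by (simp add: anassa_NN NN_Phi)
  also have "\<dots> = 0" using km by (simp add: Phi_def)
  finally have "anassa_count m k = 0" by simp
  moreover have "(\<Sum>j = 0..nat \<lceil>real k / 2\<rceil>.
       real_of_int (falling_fact (int m - int k + int j) j
                    * Stirling2_ext (int m) (int m - int k + int j))
       * (2::real) powi (int k - 2 * int j)
       * real_of_int (binom_ext (int k - int j) (int j - 1) + binom_ext (int k - int j + 1) (int j))) = 0"
  proof (rule sum.neutral, rule ballI)
    fix j
    show "real_of_int (falling_fact (int m - int k + int j) j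
                    * Stirling2_ext (int m) (int m - int k + int j))
       * (2::real) powi (int k - 2 * int j)
       * real_of_int (binom_ext (int k - int j) (int j - 1) + binom_ext (int k - int j + 1) (int j)) = 0"
      by (simp only: term_zero[OF km] of_int_0 mult_zero_left)
  qed
  ultimately show ?thesis by simp
qed

end
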